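(* Let $x_1,\dots,x_m\in\mathbb{R}^n$ and $r_1,\dots,r_m\in\mathbb{R}^n$ be arbitrary vectors with $r_1,\dots,r_m$ affinely independent. Let $\Delta x_i=x_{i+1}-x_i$, $\Delta r_i=r_{i+1}-r_i$ for $i=1,\dots,m-1$, $\Delta X=[\Delta x_1,\dots,\Delta x_{m-1}]$, $\Delta R=[\Delta r_1,\dots,\Delta r_{m-1}]$. Then $\Delta R^{\mathrm T}\Delta R$ is invertible and $$x_1-\Delta X(\Delta R^{\mathrm T}\Delta R)^{-1}\Delta R^{\mathrm T}r_1=\bar x-\Phi\Psi^{+}\bar r,$$ with $\bar x,\bar r,\Phi,\Psi$ as in the context.
   Context: $\bar x=\frac1m\sum_{i=1}^m x_i$, $\bar r=\frac1m\sum_{i=1}^m r_i$, $\Phi=[x_1-\bar x,\dots,x_m-\bar x]\in\mathbb{R}^{n\times m}$, $\Psi=[r_1-\bar r,\dots,r_m-\bar r]\in\mathbb{R}^{n\times m}$, and $\Psi^{+}$ is the Moore–Penrose pseudoinverse of $\Psi$. Vectors $r_1,\dots,r_m$ are affinely independent if $r_2-r_1,\dots,r_m-r_1$ are linearly independent. *)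

theory Defs
  imports "Jordan_Normal_Form.Matrix"
begin

text \<open>Inverse of a square matrix (meaningful when the matrix is invertible).\<close>
definition mat_inv :: "real mat \<Rightarrow> real mat" where
  "mat_inv A = (THE B. B \<in> carrier_mat (dim_row A) (dim_row A) \<and>
                       A * B = 1\<^sub>m (dim_row A) \<and> B * A = 1\<^sub>m (dim_row A))"

definition pinv :: "real mat \<Rightarrow> real mat" where
  "pinv A = (THE B. B \<in> carrier_mat (dim_col A) (dim_row A) \<and>
                    A * B * A = A \<and> B * A * B = B \<and>
                    (A * B)\<^sup>T = A * B \<and> (B * A)\<^sup>T = B * A)"

text \<open>Vectors r 0, ..., r (m-1) in R^n (0-based indexing) are affinely independent:
  r 1 - r 0, ..., r (m-1) - r 0 are linearly independent.\<close>
definition aff_indep :: "nat \<Rightarrow> nat \<Rightarrow> (nat \<Rightarrow> real vec) \<Rightarrow> bool" where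
  "aff_indep n m r \<longleftrightarrow>
     (\<forall>c :: nat \<Rightarrow> real.
        (\<forall>j<n. (\<Sum>i\<in>{1..<m}. c i * ((r i - r 0) $ j)) = 0) \<longrightarrow> (\<forall>i\<in>{1..<m}. c i = 0))"

definition vmean :: "nat \<Rightarrow> nat \<Rightarrow> (nat \<Rightarrow> real vec) \<Rightarrow> real vec" where
  "vmean n m x = vec n (\<lambda>j. (\<Sum>i<m. x i $ j) / real m)"

definition centered :: "nat \<Rightarrow> nat \<Rightarrow> (nat \<Rightarrow> real vec) \<Rightarrow> real mat" where
  "centered n m x = mat_of_cols n (map (\<lambda>i. x i - vmean n m x) [0..<m])"

definition diffmat :: "nat \<Rightarrow> nat \<Rightarrow> (nat \<Rightarrow> real vec) \<Rightarrow> real mat" where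
  "diffmat n m x = mat_of_cols n (map (\<lambda>i. x (Suc i) - x i) [0..<m - 1])"

end

theory Submission imports Defs "Jordan_Normal_Form.Determinant" begin

definition Emat :: "nat \<Rightarrow> real mat" where
  "Emat m = mat m (m-1) (\<lambda>(k,j). (if k = Suc j then 1 else 0) - (if k = j then 1 else 0))"
definition Cmat :: "nat \<Rightarrow> real mat" where
  "Cmat m = mat (m-1) m (\<lambda>(j,i). (if j < i then 1 else 0) - (real (m-1) - real j)/real m)"

lemma Emat_carrier[simp]: "Emat m \<in> carrier_mat m (m-1)" "dim_row (Emat m) = m" "dim_col (Emat m) = m-1"
  by (auto simp: Emat_def)
lemma Cmat_carrier[simp]: "Cmat m \<in> carrier_mat (m-1) m" "dim_row (Cmat m) = m-1" "dim_col (Cmat m) = m"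
  by (auto simp: Cmat_def)

lemma diffmat_carrier[simp]: "diffmat n m x \<in> carrier_mat n (m-1)" "dim_row (diffmat n m x) = n" "dim_col (diffmat n m x) = m-1"
  by (auto simp: diffmat_def)
lemma centered_carrier[simp]: "centered n m x \<in> carrier_mat n m" "dim_row (centered n m x) = n" "dim_col (centered n m x) = m"
  by (auto simp: centered_def)

lemma diffmat_index: assumes "a < n" "j < m - 1" "\<forall>i<m. x i \<in> carrier_vec n"
  shows "diffmat n m x $$ (a,j) = x (Suc j) $ a - x j $ a"
proof -
  have "dim_vec (x j) = n" using assms by auto
  then show ?thesis unfolding diffmat_def using assms(1,2) by (subst mat_of_cols_index) (auto simp: index_minus_vec)
qed

lemma vmean_index: "a < n \<Longrightarrow> vmean n m x $ a = (\<Sum>k<m. x k $ a) / real m"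
  by (simp add: vmean_def)
lemma vmean_carrier[simp]: "vmean n m x \<in> carrier_vec n" "dim_vec (vmean n m x) = n"
  by (auto simp: vmean_def)

lemma centered_index: assumes "a < n" "i < m"
  shows "centered n m x $$ (a,i) = x i $ a - (\<Sum>k<m. x k $ a) / real m"
  unfolding centered_def using assms by (subst mat_of_cols_index) (auto simp: vmean_index index_minus_vec)

lemma sum_delta_Suc: "(\<Sum>i<m. f i * ((if i = Suc j then 1 else 0) - (if i = j then 1 else 0))) = f (Suc j) - f j"
  if "Suc j < m" for f :: "nat \<Rightarrow> real"
proof -
  have "(\<Sum>i<m. f i * ((if i = Suc j then 1 else 0) - (if i = j then 1 else 0)))
     = (\<Sum>i<m. (if i = Suc j then f i else 0)) - (\<Sum>i<m. (if i = j then f i else 0))"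
    by (subst sum_subtractf[symmetric]) (rule sum.cong, auto)
  also have "\<dots> = f (Suc j) - f j" using that by (simp add: sum.delta')
  finally show ?thesis .
qed

lemma times_index: "A \<in> carrier_mat nr k \<Longrightarrow> B \<in> carrier_mat k nc \<Longrightarrow> a < nr \<Longrightarrow> b < nc \<Longrightarrow>
  (A * B) $$ (a,b) = (\<Sum>i<k. A $$ (a,i) * B $$ (i,b))"
  by (simp add: scalar_prod_def lessThan_atLeast0)

lemma centered_E: assumes "\<forall>i<m. x i \<in> carrier_vec n"
  shows "centered n m x * Emat m = diffmat n m x"
proof (rule eq_matI)
  fix a j assume "a < dim_row (diffmat n m x)" "j < dim_col (diffmat n m x)"
  hence a: "a < n" "j < m - 1" by simp_all
  have "(centered n m x * Emat m) $$ (a,j) = (\<Sum>i<m. centered n m x $$ (a,i) * Emat m $$ (i,j))"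
    using a by (intro times_index) auto
  also have "\<dots> = (\<Sum>i<m. centered n m x $$ (a,i) * ((if i = Suc j then 1 else 0) - (if i = j then 1 else 0)))"
    using a by (intro sum.cong) (auto simp: Emat_def)
  also have "\<dots> = centered n m x $$ (a,Suc j) - centered n m x $$ (a,j)"
    using a by (intro sum_delta_Suc) auto
  also have "\<dots> = diffmat n m x $$ (a,j)"
    using a assms by (simp add: centered_index diffmat_index)
  finally show "(centered n m x * Emat m) $$ (a,j) = diffmat n m x $$ (a,j)" .
qed auto

lemma C_E: "Cmat m * Emat m = 1\<^sub>m (m-1)"
proof (rule eq_matI)
  fix j l assume "j < dim_row (1\<^sub>m (m-1) :: real mat)" "l < dim_col (1\<^sub>m (m-1) :: real mat)"
  hence a: "j < m - 1" "l < m - 1" by simp_all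
  have "(Cmat m * Emat m) $$ (j,l) = (\<Sum>i<m. Cmat m $$ (j,i) * Emat m $$ (i,l))"
    using a by (intro times_index) auto
  also have "\<dots> = (\<Sum>i<m. Cmat m $$ (j,i) * ((if i = Suc l then 1 else 0) - (if i = l then 1 else 0)))"
    using a by (intro sum.cong) (auto simp: Emat_def)
  also have "\<dots> = Cmat m $$ (j,Suc l) - Cmat m $$ (j,l)"
    using a by (intro sum_delta_Suc) auto
  also have "\<dots> = 1\<^sub>m (m-1) $$ (j,l)"
    using a by (simp add: Cmat_def)
  finally show "(Cmat m * Emat m) $$ (j,l) = 1\<^sub>m (m-1) $$ (j,l)" .
qed auto

lemma weighted_telescope: fixes f :: "nat \<Rightarrow> real"
  shows "(\<Sum>j<K. (real K - real j) * (f (Suc j) - f j)) = (\<Sum>i<Suc K. f i) - real (Suc K) * f 0"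
proof (induction K)
  case 0 then show ?case by simp
next
  case (Suc K)
  have "(\<Sum>j<Suc K. (real (Suc K) - real j) * (f (Suc j) - f j))
      = (\<Sum>j<Suc K. (real K - real j) * (f (Suc j) - f j)) + (\<Sum>j<Suc K. (f (Suc j) - f j))"
    by (simp add: sum.distrib[symmetric] algebra_simps)
  also have "(\<Sum>j<Suc K. (f (Suc j) - f j)) = f (Suc K) - f 0" by (rule sum_lessThan_telescope)
  also have "(\<Sum>j<Suc K. (real K - real j) * (f (Suc j) - f j)) = (\<Sum>j<K. (real K - real j) * (f (Suc j) - f j))"
    by simp
  finally show ?case using Suc by (simp add: algebra_simps)
qed

lemma diffmat_C: assumes "\<forall>i<m. x i \<in> carrier_vec n" "m \<ge> 1"
  shows "diffmat n m x * Cmat m = centered n m x"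
proof (rule eq_matI)
  fix a i assume "a < dim_row (centered n m x)" "i < dim_col (centered n m x)"
  hence a: "a < n" "i < m" by simp_all
  define f where "f k = x k $ a" for k
  have "(diffmat n m x * Cmat m) $$ (a,i) = (\<Sum>j<m-1. diffmat n m x $$ (a,j) * Cmat m $$ (j,i))"
    using a by (intro times_index) auto
  also have "\<dots> = (\<Sum>j<m-1. (if j < i then f (Suc j) - f j else 0) - ((real (m-1) - real j) * (f (Suc j) - f j)) / real m)"
    using a assms by (intro sum.cong) (auto simp: Cmat_def diffmat_index f_def algebra_simps)
  also have "\<dots> = (\<Sum>j<m-1. (if j < i then f (Suc j) - f j else 0)) - (\<Sum>j<m-1. (real (m-1) - real j) * (f (Suc j) - f j)) / real m"
    by (simp add: sum_subtractf sum_divide_distrib)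
  also have "(\<Sum>j<m-1. (if j < i then f (Suc j) - f j else 0)) = (\<Sum>j<i. f (Suc j) - f j)"
  proof -
    have "{j. j < m - 1 \<and> j < i} = {..<i}" using a by auto
    then show ?thesis by (simp add: sum.inter_filter[symmetric] Int_def)
  qed
  also have "\<dots> = f i - f 0" by (rule sum_lessThan_telescope)
  also have "(\<Sum>j<m-1. (real (m-1) - real j) * (f (Suc j) - f j)) = (\<Sum>k<m. f k) - real m * f 0"
    using weighted_telescope[of "m-1" f] assms by simp
  also have "f i - f 0 - ((\<Sum>k<m. f k) - real m * f 0) / real m = f i - (\<Sum>k<m. f k) / real m"
    using assms by (simp add: field_simps)
  also have "\<dots> = centered n m x $$ (a,i)" using a by (simp add: centered_index f_def)
  finally show "(diffmat n m x * Cmat m) $$ (a,i) = centered n m x $$ (a,i)" .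
qed auto

lemma E_C: assumes "m \<ge> 1"
  shows "Emat m * Cmat m = mat m m (\<lambda>(k,i). (if k = i then 1 else 0) - 1 / real m)"
proof (rule eq_matI)
  fix k i assume "k < dim_row (mat m m (\<lambda>(k,i). (if k = i then 1 else 0) - 1 / real m) :: real mat)"
    "i < dim_col (mat m m (\<lambda>(k,i). (if k = i then 1 else 0) - 1 / real m) :: real mat)"
  hence a: "k < m" "i < m" by simp_all
  have "(Emat m * Cmat m) $$ (k,i) = (\<Sum>j<m-1. Emat m $$ (k,j) * Cmat m $$ (j,i))"
    using a by (intro times_index) auto
  also have "\<dots> = (\<Sum>j<m-1. (if j = k - 1 \<and> 0 < k then Cmat m $$ (j,i) else 0)) - (\<Sum>j<m-1. (if j = k then Cmat m $$ (j,i) else 0))"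
    using a by (subst sum_subtractf[symmetric], intro sum.cong) (auto simp: Emat_def)
  also have "\<dots> = (if 0 < k then Cmat m $$ (k-1,i) else 0) - (if k < m - 1 then Cmat m $$ (k,i) else 0)"
    using a by (auto simp: sum.delta')
  also have "\<dots> = (if k = i then 1 else 0) - 1 / real m"
  proof -
    have m1: "real (m - 1) = real m - 1" using assms by (simp add: of_nat_diff)
    have mp: "real m > 0" using assms by simp
    consider "k = 0" | "0 < k" "k < m - 1" | "0 < k" "k = m - 1" using a by linarith
    then show ?thesis
    proof cases
      case 1
      then show ?thesis using a mp m1 by (cases "m = 1") (auto simp: Cmat_def field_simps)
    next
      case 2
      have k1: "real (k - 1) = real k - 1" using 2 by (simp add: of_nat_diff)
      show ?thesis using 2 a mp m1 k1 by (auto simp: Cmat_def field_simps)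
    next
      case 3
      have k1: "real (k - 1) = real k - 1" using 3 by (simp add: of_nat_diff)
      have kk: "real k = real m - 1" using 3 m1 by simp
      show ?thesis using 3 a mp m1 k1 kk by (auto simp: Cmat_def field_simps)
    qed
  qed
  finally show "(Emat m * Cmat m) $$ (k,i) = mat m m (\<lambda>(k,i). (if k = i then 1 else 0) - 1 / real m) $$ (k,i)"
    using a by simp
qed auto

lemma E_C_sym: assumes "m \<ge> 1" shows "(Emat m * Cmat m)\<^sup>T = Emat m * Cmat m"
  unfolding E_C[OF assms] by (rule eq_matI) auto

lemma abel_sum: fixes f w :: "nat \<Rightarrow> real"
  shows "(\<Sum>j<K. w j * (f (Suc j) - f j)) = (\<Sum>i\<in>{1..K}. (w (i-1) - w i) * (f i - f 0)) + w K * (f K - f 0)"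
proof (induction K)
  case 0 then show ?case by simp
next
  case (Suc K)
  have "(\<Sum>i\<in>{1..Suc K}. (w (i-1) - w i) * (f i - f 0)) = (\<Sum>i\<in>{1..K}. (w (i-1) - w i) * (f i - f 0)) + (w K - w (Suc K)) * (f (Suc K) - f 0)"
    by simp
  then show ?case using Suc by (simp add: algebra_simps)
qed

lemma diffmat_inj: assumes "aff_indep n m r" "\<forall>i<m. r i \<in> carrier_vec n" "m \<ge> 1"
  and v: "v \<in> carrier_vec (m-1)" and Rv: "diffmat n m r *\<^sub>v v = 0\<^sub>v n"
  shows "v = 0\<^sub>v (m-1)"
proof -
  define w where "w j = (if j < m - 1 then v $ j else 0)" for j
  define c where "c i = w (i-1) - w i" for i
  have eq: "(\<Sum>i\<in>{1..<m}. c i * ((r i - r 0) $ a)) = 0" if a: "a < n" for a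
  proof -
    define f where "f k = r k $ a" for k
    have "0 = (diffmat n m r *\<^sub>v v) $ a" using Rv a by simp
    also have "\<dots> = (\<Sum>j<m-1. diffmat n m r $$ (a,j) * v $ j)"
      using a v by (simp add: scalar_prod_def lessThan_atLeast0)
    also have "\<dots> = (\<Sum>j<m-1. w j * (f (Suc j) - f j))"
      using a assms(2) by (intro sum.cong) (auto simp: diffmat_index w_def f_def)
    also have "\<dots> = (\<Sum>i\<in>{1..m-1}. c i * (f i - f 0))"
    proof -
      have "w (m-1) = 0" by (simp add: w_def)
      then show ?thesis using abel_sum[of w f "m-1"] by (simp add: c_def)
    qed
    also have "{1..m-1} = {1..<m}" using assms(3) by auto
    also have "(\<Sum>i\<in>{1..<m}. c i * (f i - f 0)) = (\<Sum>i\<in>{1..<m}. c i * ((r i - r 0) $ a))"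
    proof (intro sum.cong refl)
      fix i assume "i \<in> {1..<m}"
      then have "dim_vec (r 0) = n" using assms(2,3) by auto
      then show "c i * (f i - f 0) = c i * ((r i - r 0) $ a)" using a by (simp add: f_def)
    qed
    finally show ?thesis by simp
  qed
  have c0: "\<forall>i\<in>{1..<m}. c i = 0" using assms(1) eq unfolding aff_indep_def by blast
  have "\<forall>d. d \<le> m - 1 \<longrightarrow> w (m - 1 - d) = 0"
  proof
    fix d show "d \<le> m - 1 \<longrightarrow> w (m - 1 - d) = 0"
    proof (induction d)
      case 0 then show ?case by (simp add: w_def)
    next
      case (Suc d)
      show ?case
      proof
        assume d: "Suc d \<le> m - 1"
        have "c (m - 1 - d) = 0" using c0 d by auto
        then have "w (m - 1 - d - 1) = w (m - 1 - d)" by (simp add: c_def)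
        moreover have "m - 1 - d - 1 = m - 1 - Suc d" by simp
        ultimately show "w (m - 1 - Suc d) = 0" using Suc d by simp
      qed
    qed
  qed
  then have "\<And>j. j < m - 1 \<Longrightarrow> v $ j = 0"
  proof -
    fix j assume j: "j < m - 1"
    assume H: "\<forall>d. d \<le> m - 1 \<longrightarrow> w (m - 1 - d) = 0"
    have "w (m - 1 - (m - 1 - j)) = 0" using H by simp
    moreover have "m - 1 - (m - 1 - j) = j" using j by simp
    ultimately show "v $ j = 0" using j by (simp add: w_def)
  qed
  then show ?thesis using v by (intro eq_vecI) auto
qed

lemma self_scalar_zero: fixes w :: "real vec" assumes "w \<bullet> w = 0" shows "w = 0\<^sub>v (dim_vec w)"
proof (rule eq_vecI)
  have "(\<Sum>i\<in>{0..<dim_vec w}. w $ i * w $ i) = 0" using assms by (simp add: scalar_prod_def)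
  then have "\<forall>i\<in>{0..<dim_vec w}. w $ i * w $ i = 0" by (subst sum_nonneg_eq_0_iff[symmetric]) auto
  then show "\<And>i. i < dim_vec (0\<^sub>v (dim_vec w)) \<Longrightarrow> w $ i = 0\<^sub>v (dim_vec w) $ i" by auto
qed auto

lemma inv_unique: fixes A B B' :: "real mat" assumes "A \<in> carrier_mat k k" "B \<in> carrier_mat k k" "B' \<in> carrier_mat k k"
  "B * A = 1\<^sub>m k" "A * B' = 1\<^sub>m k" shows "B = B'"
proof -
  have "B = B * (A * B')" using assms right_mult_one_mat[OF assms(2)] by simp
  also have "\<dots> = (B * A) * B'" by (rule assoc_mult_mat[OF assms(2,1,3), symmetric])
  also have "\<dots> = B'" using assms left_mult_one_mat[OF assms(3)] by simp
  finally show ?thesis .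
qed

lemma A_inv: assumes aff: "aff_indep n m r" and rc: "\<forall>i<m. r i \<in> carrier_vec n" and m: "m \<ge> 1"
  shows "\<exists>Ai. Ai \<in> carrier_mat (m-1) (m-1) \<and> (diffmat n m r)\<^sup>T * diffmat n m r * Ai = 1\<^sub>m (m-1)
     \<and> Ai * ((diffmat n m r)\<^sup>T * diffmat n m r) = 1\<^sub>m (m-1)"
proof -
  let ?R = "diffmat n m r"
  let ?A = "?R\<^sup>T * ?R"
  have Ac: "?A \<in> carrier_mat (m-1) (m-1)" unfolding carrier_mat_def by simp
  have "det ?A \<noteq> 0"
  proof
    assume "det ?A = 0"
    then obtain v where v: "v \<in> carrier_vec (m-1)" "v \<noteq> 0\<^sub>v (m-1)" "?A *\<^sub>v v = 0\<^sub>v (m-1)"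
      using det_0_iff_vec_prod_zero[OF Ac] by blast
    have Rvc: "?R *\<^sub>v v \<in> carrier_vec n" using mult_mat_vec_carrier[OF diffmat_carrier(1) v(1)] .
    have "?A *\<^sub>v v = ?R\<^sup>T *\<^sub>v (?R *\<^sub>v v)" by (rule assoc_mult_mat_vec[of _ "m-1" n _ "m-1"]) (use v in auto)
    then have z: "?R\<^sup>T *\<^sub>v (?R *\<^sub>v v) = 0\<^sub>v (m-1)" using v(3) by simp
    have eq: "(?R\<^sup>T *\<^sub>v (?R *\<^sub>v v)) \<bullet> v = (?R *\<^sub>v v) \<bullet> (?R *\<^sub>v v)"
      by (rule transpose_vec_mult_scalar[OF diffmat_carrier(1) v(1) Rvc])
    have "(?R *\<^sub>v v) \<bullet> (?R *\<^sub>v v) = 0" using eq z v(1) by simp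
    then have "?R *\<^sub>v v = 0\<^sub>v n" using self_scalar_zero[of "?R *\<^sub>v v"] by simp
    then have "v = 0\<^sub>v (m-1)" using diffmat_inj[OF aff rc m v(1)] by simp
    with v(2) show False by simp
  qed
  from det_non_zero_imp_unit[OF Ac this, of "()"]
  show ?thesis unfolding Units_def by (auto simp: ring_mat_simps)
qed

lemma mat_inv_eq: fixes A Ai :: "real mat"
  assumes "A \<in> carrier_mat k k" "Ai \<in> carrier_mat k k" "A * Ai = 1\<^sub>m k" "Ai * A = 1\<^sub>m k"
  shows "mat_inv A = Ai"
  unfolding mat_inv_def
proof (rule the_equality)
  show "Ai \<in> carrier_mat (dim_row A) (dim_row A) \<and> A * Ai = 1\<^sub>m (dim_row A) \<and> Ai * A = 1\<^sub>m (dim_row A)"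
    using assms by auto
  fix B assume "B \<in> carrier_mat (dim_row A) (dim_row A) \<and> A * B = 1\<^sub>m (dim_row A) \<and> B * A = 1\<^sub>m (dim_row A)"
  then show "B = Ai" using inv_unique[of A k B Ai] assms by auto
qed

lemma pinv_unique: fixes M X Y :: "real mat"
  assumes M: "M \<in> carrier_mat p q" and X: "X \<in> carrier_mat q p" and Y: "Y \<in> carrier_mat q p"
  and X1: "M * X * M = M" and X2: "X * M * X = X" and X3: "(M * X)\<^sup>T = M * X" and X4: "(X * M)\<^sup>T = X * M"
  and Y1: "M * Y * M = M" and Y2: "Y * M * Y = Y" and Y3: "(M * Y)\<^sup>T = M * Y" and Y4: "(Y * M)\<^sup>T = Y * M"
  shows "X = Y"
proof -
  have MX: "M * X \<in> carrier_mat p p" and XM: "X * M \<in> carrier_mat q q"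
   and MY: "M * Y \<in> carrier_mat p p" and YM: "Y * M \<in> carrier_mat q q" using M X Y by auto
  have Mt: "M\<^sup>T \<in> carrier_mat q p" and Xt: "X\<^sup>T \<in> carrier_mat p q" and Yt: "Y\<^sup>T \<in> carrier_mat p q"
    using M X Y by auto
  have a: "X = X * (M * X)\<^sup>T" using X2 X3 assoc_mult_mat[OF X M X] by simp
  also have "(M * X)\<^sup>T = X\<^sup>T * M\<^sup>T" using transpose_mult[OF M X] .
  also have "M\<^sup>T = (M * Y * M)\<^sup>T" using Y1 by simp
  also have "(M * Y * M)\<^sup>T = M\<^sup>T * (M * Y)\<^sup>T" using transpose_mult[OF MY M] .
  also have "(M * Y)\<^sup>T = M * Y" by (rule Y3)
  also have "X * (X\<^sup>T * (M\<^sup>T * (M * Y))) = X * ((X\<^sup>T * M\<^sup>T) * (M * Y))"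
    using assoc_mult_mat[OF Xt Mt MY] by simp
  also have "X\<^sup>T * M\<^sup>T = (M * X)\<^sup>T" using transpose_mult[OF M X] by simp
  also have "(M * X)\<^sup>T = M * X" by (rule X3)
  also have "X * ((M * X) * (M * Y)) = (X * M * X) * (M * Y)"
  proof -
    have XMc: "X * M \<in> carrier_mat q q" by (rule XM)
    have XMY: "X * (M * Y) \<in> carrier_mat q p" using X MY by auto
    have "(X * M * X) * (M * Y) = (X * M) * (X * (M * Y))" using assoc_mult_mat[OF XMc X MY] .
    also have "(X * M) * (X * (M * Y)) = X * (M * (X * (M * Y)))" using assoc_mult_mat[OF X M XMY] by simp
    also have "M * (X * (M * Y)) = (M * X) * (M * Y)" using assoc_mult_mat[OF M X MY] by simp
    finally show ?thesis by simp
  qed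
  also have "\<dots> = X * (M * Y)" using X2 by simp
  finally have xeq: "X = X * (M * Y)" .
  have "Y = (Y * M)\<^sup>T * Y" using Y2 Y4 by simp
  also have "(Y * M)\<^sup>T = M\<^sup>T * Y\<^sup>T" using transpose_mult[OF Y M] .
  also have "M\<^sup>T = (M * X * M)\<^sup>T" using X1 by simp
  also have "(M * X * M)\<^sup>T = M\<^sup>T * (M * X)\<^sup>T" using transpose_mult[OF MX M] .
  also have "(M * X)\<^sup>T = M * X" by (rule X3)
  also have "M\<^sup>T * (M * X) = (X * M)\<^sup>T * M\<^sup>T"
  proof -
    have "(X * M)\<^sup>T = M\<^sup>T * X\<^sup>T" using transpose_mult[OF X M] .
    then have "(X * M)\<^sup>T * M\<^sup>T = M\<^sup>T * X\<^sup>T * M\<^sup>T" by simp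
    also have "\<dots> = M\<^sup>T * (X\<^sup>T * M\<^sup>T)" using assoc_mult_mat[OF Mt Xt Mt] .
    also have "X\<^sup>T * M\<^sup>T = (M * X)\<^sup>T" using transpose_mult[OF M X] by simp
    finally show ?thesis using X3 by simp
  qed
  also have "(X * M)\<^sup>T = X * M" by (rule X4)
  also have "X * M * M\<^sup>T * Y\<^sup>T * Y = X * M * (M\<^sup>T * Y\<^sup>T) * Y"
    using assoc_mult_mat[OF XM Mt Yt] by simp
  also have "M\<^sup>T * Y\<^sup>T = (Y * M)\<^sup>T" using transpose_mult[OF Y M] by simp
  also have "(Y * M)\<^sup>T = Y * M" by (rule Y4)
  also have "X * M * (Y * M) * Y = X * (M * Y * M * Y)"
  proof -
    have MYM: "M * (Y * M) \<in> carrier_mat p q" using M Y by auto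
    have "X * M * (Y * M) = X * (M * (Y * M))" using assoc_mult_mat[OF X M YM] .
    then have "X * M * (Y * M) * Y = X * (M * (Y * M)) * Y" by simp
    also have "\<dots> = X * (M * (Y * M) * Y)" using assoc_mult_mat[OF X MYM Y] .
    also have "M * (Y * M) = M * Y * M" using assoc_mult_mat[OF M Y M] by simp
    finally show ?thesis .
  qed
  also have "M * Y * M * Y = M * Y" using Y1 by simp
  finally have "Y = X * (M * Y)" .
  with xeq show ?thesis by simp
qed

lemma pinv_eq: fixes M X :: "real mat"
  assumes M: "M \<in> carrier_mat p q" and X: "X \<in> carrier_mat q p"
  and X1: "M * X * M = M" and X2: "X * M * X = X" and X3: "(M * X)\<^sup>T = M * X" and X4: "(X * M)\<^sup>T = X * M"
  shows "pinv M = X"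
  unfolding pinv_def
proof (rule the_equality)
  show "X \<in> carrier_mat (dim_col M) (dim_row M) \<and> M * X * M = M \<and> X * M * X = X \<and> (M * X)\<^sup>T = M * X \<and> (X * M)\<^sup>T = X * M"
    using assms by auto
  fix Y assume "Y \<in> carrier_mat (dim_col M) (dim_row M) \<and> M * Y * M = M \<and> Y * M * Y = Y \<and> (M * Y)\<^sup>T = M * Y \<and> (Y * M)\<^sup>T = Y * M"
  then show "Y = X" using pinv_unique[OF M X, of Y] assms by auto
qed

lemma mult_unit0: fixes A :: "real mat" assumes "A \<in> carrier_mat p m" "m > 0" "a < p"
  shows "(A *\<^sub>v unit_vec m 0) $ a = A $$ (a,0)"
proof -
  have "(A *\<^sub>v unit_vec m 0) $ a = (\<Sum>i\<in>{0..<m}. A $$ (a,i) * unit_vec m 0 $ i)"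
    using assms by (simp add: scalar_prod_def)
  also have "\<dots> = (\<Sum>i\<in>{0..<m}. if i = 0 then A $$ (a,i) else 0)"
    by (intro sum.cong) auto
  also have "\<dots> = A $$ (a,0)" using assms by simp
  finally show ?thesis .
qed

theorem mainTheorem3:
  fixes n m :: nat and x r :: "nat \<Rightarrow> real vec"
  assumes "m \<ge> 1"
    and "\<forall>i<m. x i \<in> carrier_vec n"
    and "\<forall>i<m. r i \<in> carrier_vec n"
    and "aff_indep n m r"
  shows "invertible_mat ((diffmat n m r)\<^sup>T * diffmat n m r) \<and>
         x 0 - (diffmat n m x * mat_inv ((diffmat n m r)\<^sup>T * diffmat n m r) * (diffmat n m r)\<^sup>T) *\<^sub>v r 0
           = vmean n m x - (centered n m x * pinv (centered n m r)) *\<^sub>v vmean n m r"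
proof -
  define k where "k = m - 1"
  define R where "R = diffmat n m r"
  define X where "X = diffmat n m x"
  define Ps where "Ps = centered n m r"
  define Ph where "Ph = centered n m x"
  define E where "E = Emat m"
  define C where "C = Cmat m"
  define A where "A = R\<^sup>T * R"
  have Rc: "R \<in> carrier_mat n k" and Rt: "R\<^sup>T \<in> carrier_mat k n" and Xc: "X \<in> carrier_mat n k"
    and Psc: "Ps \<in> carrier_mat n m" and Phc: "Ph \<in> carrier_mat n m"
    and Ec: "E \<in> carrier_mat m k" and Cc: "C \<in> carrier_mat k m" and Ac: "A \<in> carrier_mat k k"
    unfolding R_def X_def Ps_def Ph_def E_def C_def A_def k_def by auto
  obtain Ai where Aic: "Ai \<in> carrier_mat k k" and AAi: "A * Ai = 1\<^sub>m k" and AiA: "Ai * A = 1\<^sub>m k"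
    using A_inv[OF assms(4,3,1)] unfolding A_def R_def k_def by blast
  have PsE: "Ps * E = R" unfolding Ps_def E_def R_def using centered_E[OF assms(3)] .
  have PhE: "Ph * E = X" unfolding Ph_def E_def X_def using centered_E[OF assms(2)] .
  have RC: "R * C = Ps" unfolding Ps_def C_def R_def using diffmat_C[OF assms(3,1)] .
  have XC: "X * C = Ph" unfolding Ph_def C_def X_def using diffmat_C[OF assms(2,1)] .
  have CE: "C * E = 1\<^sub>m k" unfolding C_def E_def k_def by (rule C_E)
  have ECs: "(E * C)\<^sup>T = E * C" unfolding C_def E_def by (rule E_C_sym[OF assms(1)])
  have inv: "invertible_mat A" unfolding invertible_mat_def inverts_mat_def square_mat.simps
    using Ac Aic AAi AiA by auto
  have mi: "mat_inv A = Ai" by (rule mat_inv_eq[OF Ac Aic AAi AiA])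
  have At: "A\<^sup>T = A" unfolding A_def using transpose_mult[OF Rt Rc] by simp
  have Ait: "Ai\<^sup>T = Ai"
  proof (rule inv_unique[OF Ac _ Aic _ AAi])
    show "Ai\<^sup>T \<in> carrier_mat k k" using Aic by simp
    have "Ai\<^sup>T * A = (A * Ai)\<^sup>T" using transpose_mult[OF Ac Aic] At by simp
    then show "Ai\<^sup>T * A = 1\<^sub>m k" using AAi by simp
  qed
  define H where "H = Ai * R\<^sup>T"
  have Hc: "H \<in> carrier_mat k n" unfolding H_def using Aic Rt by auto
  have HR: "H * R = 1\<^sub>m k" unfolding H_def using assoc_mult_mat[OF Aic Rt Rc] AiA A_def by simp
  have HPs: "H * Ps = C"
  proof -
    have "H * Ps = H * R * C" using RC assoc_mult_mat[OF Hc Rc Cc] by simp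
    then show ?thesis using HR Cc by simp
  qed
  define B where "B = E * H"
  have Bc: "B \<in> carrier_mat m n" unfolding B_def using Ec Hc by auto
  have PsB: "Ps * B = R * H" unfolding B_def using assoc_mult_mat[OF Psc Ec Hc] PsE by simp
  have BPs: "B * Ps = E * C" unfolding B_def using assoc_mult_mat[OF Ec Hc Psc] HPs by simp
  have P1: "Ps * B * Ps = Ps" using PsB assoc_mult_mat[OF Rc Hc Psc] HPs RC by simp
  have P2: "B * Ps * B = B"
  proof -
    have "B * Ps * B = E * C * (E * H)" using BPs B_def by simp
    also have "\<dots> = E * (C * (E * H))" using assoc_mult_mat[OF Ec Cc Bc[unfolded B_def]] .
    also have "C * (E * H) = C * E * H" using assoc_mult_mat[OF Cc Ec Hc] by simp
    finally show ?thesis using CE Hc B_def by simp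
  qed
  have P3: "(Ps * B)\<^sup>T = Ps * B"
  proof -
    have "(R * H)\<^sup>T = H\<^sup>T * R\<^sup>T" using transpose_mult[OF Rc Hc] .
    also have "H\<^sup>T = R * Ai" unfolding H_def using transpose_mult[OF Aic Rt] Ait by simp
    also have "R * Ai * R\<^sup>T = R * H" unfolding H_def using assoc_mult_mat[OF Rc Aic Rt] .
    finally show ?thesis using PsB by simp
  qed
  have P4: "(B * Ps)\<^sup>T = B * Ps" using BPs ECs by simp
  have pinvB: "pinv Ps = B" by (rule pinv_eq[OF Psc Bc P1 P2 P3 P4])
  define G where "G = X * H"
  have Gc: "G \<in> carrier_mat n n" unfolding G_def using Xc Hc by auto
  have G1: "X * mat_inv A * R\<^sup>T = G" unfolding mi G_def H_def using assoc_mult_mat[OF Xc Aic Rt] .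
  have G2: "Ph * B = G" unfolding B_def G_def using assoc_mult_mat[OF Phc Ec Hc] PhE by simp
  have GPs: "G * Ps = Ph" unfolding G_def using assoc_mult_mat[OF Xc Hc Psc] HPs XC by simp
  have m0: "m > 0" using assms(1) by simp
  have ue: "unit_vec m 0 \<in> carrier_vec m" by simp
  have key: "G *\<^sub>v (Ps *\<^sub>v unit_vec m 0) = Ph *\<^sub>v unit_vec m 0"
    using assoc_mult_mat_vec[OF Gc Psc ue] GPs by simp
  have r0c: "r 0 \<in> carrier_vec n" and x0c: "x 0 \<in> carrier_vec n" using assms m0 by auto
  have eqs: "Ps *\<^sub>v unit_vec m 0 = r 0 - vmean n m r"
    by (rule eq_vecI) (use r0c m0 in \<open>auto simp: mult_unit0[OF Psc m0] Ps_def centered_index vmean_index\<close>)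
  have eqx: "Ph *\<^sub>v unit_vec m 0 = x 0 - vmean n m x"
    by (rule eq_vecI) (use x0c m0 in \<open>auto simp: mult_unit0[OF Phc m0] Ph_def centered_index vmean_index\<close>)
  have key2: "G *\<^sub>v r 0 - G *\<^sub>v vmean n m r = x 0 - vmean n m x"
    using key eqs eqx mult_minus_distrib_mat_vec[OF Gc r0c vmean_carrier(1)] by simp
  have fin: "x 0 - G *\<^sub>v r 0 = vmean n m x - G *\<^sub>v vmean n m r"
  proof (rule eq_vecI)
    fix a assume "a < dim_vec (vmean n m x - G *\<^sub>v vmean n m r)"
    then have a: "a < n" using Gc by simp
    have "(G *\<^sub>v r 0 - G *\<^sub>v vmean n m r) $ a = (x 0 - vmean n m x) $ a" using key2 by simp
    then show "(x 0 - G *\<^sub>v r 0) $ a = (vmean n m x - G *\<^sub>v vmean n m r) $ a"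
      using a Gc x0c by simp
  qed (use Gc x0c in simp)
  show ?thesis using inv fin G1 G2 pinvB unfolding A_def R_def X_def Ps_def Ph_def by simp
qed

end
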